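(* Fix $a>0$ and let $q\to0^+$. Let $x_0$ be the solution of $e^{-x_0}x_0^{a}=q\,\Gamma(a)$ with $x_0\to\infty$ as $q\to0^+$, and let $x$ be the solution of $Q(a,x)=q$. Put $L=\ln x_0$ and $b=1-a$, and $$d_1=L-1,\qquad d_2=\tfrac12\bigl(3b-2bL+L^2-2L+2\bigr),$$ $$d_3=\tfrac16\bigl(24bL-11b^2-24b-6L^2+12L-12-9bL^2+6b^2L+2L^3\bigr),$$ $$d_4=\tfrac1{12}\bigl(72+36L^2+3L^4-72L+162b-168bL-12L^3+25b^3-22bL^3+36b^2L^2-12b^3L+84bL^2+120b^2-114b^2L\bigr).$$ Then for each $K\in\{1,2,3,4\}$, $$x=x_0-L+b\sum_{k=1}^{K}\frac{d_k}{x_0^k}+o\bigl(x_0^{-K}\bigr)\qquad(q\to0^+).$$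
   Context: $Q(a,x)=\frac{1}{\Gamma(a)}\int_x^\infty t^{a-1}e^{-t}\,dt$ for $a>0$, $x>0$ (the regularized upper incomplete gamma function), which has the asymptotic expansion $Q(a,x)\sim\frac{x^{a-1}e^{-x}}{\Gamma(a)}\sum_{n\ge0}\frac{(-1)^n(1-a)_n}{x^n}$ as $x\to\infty$, with $(c)_n=\Gamma(c+n)/\Gamma(c)$. *)

theory Defs
  imports "HOL-Analysis.Analysis" "HOL-Library.Landau_Symbols"
begin

definition Q_inc :: "real \<Rightarrow> real \<Rightarrow> real" where
  "Q_inc a x = integral {x..} (\<lambda>t. t powr (a - 1) * exp (- t)) / Gamma a"

definition dcoef :: "real \<Rightarrow> real \<Rightarrow> nat \<Rightarrow> real" where
  "dcoef b L k =
    (if k = 1 then L - 1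
     else if k = 2 then (3*b - 2*b*L + L^2 - 2*L + 2) / 2
     else if k = 3 then (24*b*L - 11*b^2 - 24*b - 6*L^2 + 12*L - 12 - 9*b*L^2
                         + 6*b^2*L + 2*L^3) / 6
     else if k = 4 then (72 + 36*L^2 + 3*L^4 - 72*L + 162*b - 168*b*L - 12*L^3
                         + 25*b^3 - 22*b*L^3 + 36*b^2*L^2 - 12*b^3*L + 84*b*L^2
                         + 120*b^2 - 114*b^2*L) / 12
     else 0)"

end

theory Submission
  imports Defs "HOL-Real_Asymp.Real_Asymp"
begin


definition ee :: "real \<Rightarrow> real \<Rightarrow> real" where
  "ee c t = t powr (c - 1) * exp (- t)"

lemma ee_deriv:
  assumes "t > 0"
  shows "((ee c) has_real_derivative ((c - 1) * ee (c - 1) t - ee c t)) (at t)"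
  unfolding ee_def
  by (rule derivative_eq_intros refl | use assms in simp)+

lemma ee_cont: "continuous_on {x..y} (ee c)" if "x > 0" for x y
  unfolding ee_def using that by (auto intro!: continuous_intros)

lemma ee_int: "ee c integrable_on {x..y}" if "x > 0"
  using ee_cont[OF that] integrable_continuous_interval by blast

lemma ee_pos: "t > 0 \<Longrightarrow> ee c t > 0"
  unfolding ee_def by simp

lemma ee_rec:
  assumes "0 < x" "x \<le> y"
  shows "integral {x..y} (ee c) = ee c x - ee c y + (c - 1) * integral {x..y} (ee (c - 1))"
proof -
  have D: "(ee c has_vector_derivative ((c - 1) * ee (c - 1) t - ee c t)) (at t within {x..y})"
    if "t \<in> {x..y}" for t
  proof -
    have "t > 0" using that assms by auto
    from ee_deriv[OF this, of c] show ?thesis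
      unfolding has_real_derivative_iff_has_vector_derivative
      by (rule has_vector_derivative_at_within)
  qed
  have F: "((\<lambda>t. (c - 1) * ee (c - 1) t - ee c t) has_integral (ee c y - ee c x)) {x..y}"
    by (rule fundamental_theorem_of_calculus[OF assms(2) D])
  have I1: "(ee c has_integral integral {x..y} (ee c)) {x..y}"
    using ee_int[OF assms(1)] by (rule integrable_integral)
  have I2: "(ee (c - 1) has_integral integral {x..y} (ee (c - 1))) {x..y}"
    using ee_int[OF assms(1)] by (rule integrable_integral)
  have I3: "((\<lambda>t. (c - 1) * ee (c - 1) t - ee c t) has_integral
      ((c - 1) * integral {x..y} (ee (c - 1)) - integral {x..y} (ee c))) {x..y}"
    by (intro has_integral_diff has_integral_mult_right I1 I2)
  have "ee c y - ee c x = (c - 1) * integral {x..y} (ee (c - 1)) - integral {x..y} (ee c)"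
    using has_integral_unique[OF F I3] .
  then show ?thesis by linarith
qed

lemma ee_int_nonneg: "0 < x \<Longrightarrow> 0 \<le> integral {x..y} (ee c)"
  by (rule integral_nonneg) (auto simp: ee_int intro!: less_imp_le[OF ee_pos])

lemma ee_shift_le: "0 < x \<Longrightarrow> x \<le> t \<Longrightarrow> ee (c - 1) t \<le> ee c t / x"
  unfolding ee_def
  by (simp add: powr_diff field_simps power2_eq_square mult_left_mono)

lemma ee_tail_bound:
  assumes "0 < x" "2 * (c - 1) \<le> x" "x \<le> y"
  shows "integral {x..y} (ee c) \<le> 2 * ee c x"
proof (cases "c \<le> 1")
  case True
  have "(c - 1) * integral {x..y} (ee (c - 1)) \<le> 0"
    using True ee_int_nonneg[OF assms(1)] by (simp add: mult_nonpos_nonneg)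
  then show ?thesis using ee_rec[OF assms(1,3), of c] ee_pos[of y c] ee_pos[of x c] assms by linarith
next
  case False
  have "integral {x..y} (ee (c - 1)) \<le> integral {x..y} (\<lambda>t. ee c t / x)"
    using assms by (intro integral_le) (auto simp: ee_int ee_shift_le)
  also have "\<dots> = integral {x..y} (ee c) / x" by simp
  finally have "(c - 1) * integral {x..y} (ee (c - 1)) \<le> (c - 1) * (integral {x..y} (ee c) / x)"
    using False by (intro mult_left_mono) auto
  also have "\<dots> = ((c - 1) / x) * integral {x..y} (ee c)" by simp
  also have "\<dots> \<le> (1 / 2) * integral {x..y} (ee c)"
  proof (rule mult_right_mono)
    show "(c - 1) / x \<le> 1 / 2" using assms(1,2) by (simp add: field_simps)
    show "0 \<le> integral {x..y} (ee c)" using ee_int_nonneg[OF assms(1)] .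
  qed
  finally show ?thesis using ee_rec[OF assms(1,3), of c] ee_pos[of y c] assms by linarith
qed

definition SS :: "real \<Rightarrow> real \<Rightarrow> real" where
  "SS a t = ee a t + (a - 1) * ee (a - 1) t + (a - 1) * (a - 2) * ee (a - 2) t
     + (a - 1) * (a - 2) * (a - 3) * ee (a - 3) t + (a - 1) * (a - 2) * (a - 3) * (a - 4) * ee (a - 4) t"

definition al5 :: "real \<Rightarrow> real" where
  "al5 a = (a - 1) * (a - 2) * (a - 3) * (a - 4) * (a - 5)"

lemma I_expand:
  assumes "0 < x" "x \<le> y"
  shows "integral {x..y} (ee a) = SS a x - SS a y + al5 a * integral {x..y} (ee (a - 5))"
proof -
  have r: "\<And>c. integral {x..y} (ee c) = ee c x - ee c y + (c - 1) * integral {x..y} (ee (c - 1))"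
    using ee_rec[OF assms] .
  have e: "a - 1 - 1 = a - 2" "a - 2 - 1 = a - 3" "a - 3 - 1 = a - 4" "a - 4 - 1 = a - 5" by simp_all
  note r0 = r[of a] and r1 = r[of "a - 1", unfolded e] and r2 = r[of "a - 2", unfolded e]
    and r3 = r[of "a - 3", unfolded e] and r4 = r[of "a - 4", unfolded e]
  show ?thesis
    unfolding SS_def al5_def r0 r1 r2 r3 r4 e by (simp add: algebra_simps)
qed

lemma ee_lim: "((\<lambda>y. ee c y) \<longlongrightarrow> 0) at_top"
  unfolding ee_def by real_asymp

lemma SS_lim: "((\<lambda>y. SS a y) \<longlongrightarrow> 0) at_top"
proof -
  have "((\<lambda>y. SS a y) \<longlongrightarrow> 0 + (a - 1) * 0 + (a - 1) * (a - 2) * 0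
     + (a - 1) * (a - 2) * (a - 3) * 0 + (a - 1) * (a - 2) * (a - 3) * (a - 4) * 0) at_top"
    unfolding SS_def by (intro tendsto_intros ee_lim)
  then show ?thesis by simp
qed

lemma F_main:
  assumes "0 < x" "2 * (a - 6) \<le> x"
  shows "\<exists>l. (ee a has_integral l) {x..} \<and> \<bar>l - SS a x\<bar> \<le> 2 * \<bar>al5 a\<bar> * ee (a - 5) x"
proof -
  define J where "J y = integral {x..y} (ee a)" for y
  define B where "B = 2 * ee (a - 5) x"
  have I5: "0 \<le> integral {x..y} (ee (a - 5)) \<and> integral {x..y} (ee (a - 5)) \<le> B" if "x \<le> y" for y
  proof
    show "0 \<le> integral {x..y} (ee (a - 5))" using ee_int_nonneg[OF assms(1)] .
    have "2 * (a - 5 - 1) \<le> x" using assms(2) by simp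
    from ee_tail_bound[OF assms(1) this that] show "integral {x..y} (ee (a - 5)) \<le> B"
      unfolding B_def .
  qed
  have Jb: "\<bar>J y - SS a x + SS a y\<bar> \<le> \<bar>al5 a\<bar> * B" if "x \<le> y" for y
  proof -
    have "J y - SS a x + SS a y = al5 a * integral {x..y} (ee (a - 5))"
      unfolding J_def using I_expand[OF assms(1) that, of a] by simp
    also have "\<bar>\<dots>\<bar> = \<bar>al5 a\<bar> * integral {x..y} (ee (a - 5))"
      using I5[OF that] by (simp add: abs_mult)
    also have "\<dots> \<le> \<bar>al5 a\<bar> * B"
      using I5[OF that] by (intro mult_left_mono) auto
    finally show ?thesis .
  qed
  have monoJ: "mono J"
  proof (rule monoI)
    fix y1 y2 :: real assume "y1 \<le> y2"
    show "J y1 \<le> J y2" unfolding J_def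
      using \<open>y1 \<le> y2\<close> assms(1)
      by (intro integral_subset_le) (auto simp: ee_int intro!: less_imp_le[OF ee_pos])
  qed
  have "eventually (\<lambda>y. -1 < SS a y) at_top"
    using SS_lim by (rule order_tendstoD(1)) simp
  then obtain Y1 where Y1: "\<And>y. y \<ge> Y1 \<Longrightarrow> -1 < SS a y"
    by (auto simp: eventually_at_top_linorder)
  have Jbd: "J y \<le> SS a x + 1 + \<bar>al5 a\<bar> * B" for y
  proof -
    define z where "z = max y (max x Y1)"
    have "J y \<le> J z" using monoJ unfolding z_def by (auto intro: monoD)
    also have "J z \<le> SS a x - SS a z + \<bar>al5 a\<bar> * B"
    proof -
      have "x \<le> z" unfolding z_def by simp
      from Jb[OF this] show ?thesis by (simp add: abs_le_iff)
    qed
    also have "\<dots> \<le> SS a x + 1 + \<bar>al5 a\<bar> * B"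
    proof -
      have "Y1 \<le> z" unfolding z_def by simp
      from Y1[OF this] show ?thesis by linarith
    qed
    finally show ?thesis .
  qed
  define l where "l = (SUP n. J (real n))"
  have "(\<lambda>n. J (real n)) \<longlonglongrightarrow> l"
    unfolding l_def
  proof (rule LIMSEQ_incseq_SUP)
    show "bdd_above (range (\<lambda>n. J (real n)))"
      using Jbd by (intro bdd_aboveI[where M = "SS a x + 1 + \<bar>al5 a\<bar> * B"]) auto
    show "incseq (\<lambda>n. J (real n))"
      using monoJ by (auto simp: incseq_def intro: monoD)
  qed
  then have limJ: "(J \<longlongrightarrow> l) at_top"
    by (rule tendsto_at_topI_sequentially_real[OF monoJ])
  have hi: "(ee a has_integral l) {x..}"
  proof (rule has_integral_to_inf)
    show "\<And>y. ee a integrable_on {x..y}" using ee_int[OF assms(1)] .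
    show "((\<lambda>y. integral {x..y} (ee a)) \<longlongrightarrow> l) at_top" using limJ unfolding J_def .
    show "\<And>y. x \<le> y \<Longrightarrow> 0 \<le> ee a y" using assms(1) by (intro less_imp_le[OF ee_pos]) auto
  qed
  have "((\<lambda>y. \<bar>J y - SS a x + SS a y\<bar>) \<longlongrightarrow> \<bar>l - SS a x + 0\<bar>) at_top"
    by (intro tendsto_intros limJ SS_lim)
  moreover have "eventually (\<lambda>y. \<bar>J y - SS a x + SS a y\<bar> \<le> \<bar>al5 a\<bar> * B) at_top"
    using eventually_ge_at_top[of x] by (rule eventually_mono) (rule Jb)
  ultimately have "\<bar>l - SS a x + 0\<bar> \<le> \<bar>al5 a\<bar> * B"
    by (rule tendsto_upperbound) simp
  with hi show ?thesis unfolding B_def by (intro exI[of _ l]) (auto simp: mult_ac)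
qed



definition PP :: "real \<Rightarrow> real \<Rightarrow> real" where
  "PP b w = 1 - b*w + b*(b+1)*w^2 - b*(b+1)*(b+2)*w^3 + b*(b+1)*(b+2)*(b+3)*w^4"

definition PPw :: "real \<Rightarrow> real \<Rightarrow> real" where
  "PPw b w = - b + 2*b*(b+1)*w - 3*b*(b+1)*(b+2)*w^2 + 4*b*(b+1)*(b+2)*(b+3)*w^3"

definition Pd :: "real \<Rightarrow> real \<Rightarrow> real" where
  "Pd b z = PPw b (1/z) * (- 1 / z^2)"

definition HH :: "real \<Rightarrow> real \<Rightarrow> real" where
  "HH b z = - z - b * ln z + ln (PP b (1/z))"

lemma PPw_deriv: "(PP b has_real_derivative PPw b w) (at w)"
  unfolding PP_def PPw_def
  apply (rule derivative_eq_intros refl)+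
  apply (simp add: algebra_simps power2_eq_square)
  done

lemma inv_deriv: "z \<noteq> 0 \<Longrightarrow> ((\<lambda>z::real. 1/z) has_real_derivative (- 1 / z^2)) (at z)"
  apply (rule derivative_eq_intros refl | simp)+
  apply (simp add: power2_eq_square)
  done

lemma PP_deriv:
  assumes "z \<noteq> 0"
  shows "((\<lambda>z. PP b (1/z)) has_real_derivative Pd b z) (at z)"
  unfolding Pd_def by (rule DERIV_chain2[OF PPw_deriv inv_deriv[OF assms]])

lemma HH_deriv:
  assumes "z > 0" "PP b (1/z) > 0"
  shows "(HH b has_real_derivative (-1 - b/z + Pd b z / PP b (1/z))) (at z)"
  unfolding HH_def
  by (rule derivative_eq_intros refl PP_deriv | use assms in simp)+

lemma HH_ev_deriv: "eventually (\<lambda>z. -1 - b/z + Pd b z / PP b (1/z) \<le> -1/2) at_top"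
  unfolding PP_def Pd_def PPw_def by (real_asymp simp add: field_simps)

lemma PP_ev: "eventually (\<lambda>z. PP b (1/z) \<ge> 3/4) at_top"
  unfolding PP_def by (real_asymp simp add: field_simps)

lemma ee_shift:
  assumes "x > 0"
  shows "ee (a - real n) x = ee a x / x ^ n"
proof -
  have "x powr (a - real n - 1) = x powr (a - 1) / x powr (real n)"
    using assms by (simp add: powr_diff[symmetric] algebra_simps)
  then show ?thesis using assms unfolding ee_def by (simp add: powr_realpow)
qed

lemma SS_PP:
  assumes "x > 0"
  shows "SS a x = ee a x * PP (1 - a) (1/x)"
proof -
  have e: "ee (a - real n) x = ee a x * (1/x) ^ n" for n
    using ee_shift[OF assms, of a n] by (simp add: power_one_over)
  have "SS a x = ee a x + (a - 1) * (ee a x * (1/x)^1) + (a - 1) * (a - 2) * (ee a x * (1/x)^2)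
     + (a - 1) * (a - 2) * (a - 3) * (ee a x * (1/x)^3) + (a - 1) * (a - 2) * (a - 3) * (a - 4) * (ee a x * (1/x)^4)"
    unfolding SS_def e[of 1, symmetric] e[of 2, symmetric] e[of 3, symmetric] e[of 4, symmetric] by simp
  also have "\<dots> = ee a x * PP (1 - a) (1/x)"
    unfolding PP_def by algebra
  finally show ?thesis .
qed

lemma ee5: "x > 0 \<Longrightarrow> ee (a - 5) x = ee a x / x ^ 5"
  using ee_shift[of x a 5] by simp

lemma ln_ee: "x > 0 \<Longrightarrow> ln (ee a x) = (a - 1) * ln x - x"
  unfolding ee_def by (simp add: ln_mult)



definition YY :: "real \<Rightarrow> real \<Rightarrow> real" where
  "YY b t = t - ln t + b * (\<Sum>k=1..4. dcoef b (ln t) k / t ^ k)"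

lemma set4: "{1..4::nat} = {1,2,3,4}" by auto

lemma dc1: "dcoef b L 1 = L - 1" by (simp add: dcoef_def)
lemma dc1': "dcoef b L (Suc 0) = L - 1" by (simp add: dcoef_def)
lemma dc2: "dcoef b L 2 = (3*b - 2*b*L + L^2 - 2*L + 2) / 2" by (simp add: dcoef_def)
lemma dc3: "dcoef b L 3 = (24*b*L - 11*b^2 - 24*b - 6*L^2 + 12*L - 12 - 9*b*L^2
                         + 6*b^2*L + 2*L^3) / 6" by (simp add: dcoef_def)
lemma dc4: "dcoef b L 4 = (72 + 36*L^2 + 3*L^4 - 72*L + 162*b - 168*b*L - 12*L^3
                         + 25*b^3 - 22*b*L^3 + 36*b^2*L^2 - 12*b^3*L + 84*b*L^2
                         + 120*b^2 - 114*b^2*L) / 12" by (simp add: dcoef_def)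

lemma YY_eq: "YY b t = t - ln t + b * (dcoef b (ln t) 1 / t + dcoef b (ln t) 2 / t^2
   + dcoef b (ln t) 3 / t^3 + dcoef b (ln t) 4 / t^4)"
  unfolding YY_def set4 by simp

definition Yp :: "real \<Rightarrow> real \<Rightarrow> real" where
  "Yp b x = x - ln x + b*((ln x - 1)/x + ((3*b - 2*b*ln x + (ln x * ln x) - 2*ln x + 2) / 2)/x^2
   + ((24*b*ln x - 11*(b*b) - 24*b - 6*(ln x * ln x) + 12*ln x - 12 - 9*b*(ln x * ln x)
                         + 6*(b*b)*ln x + 2*(ln x * ln x * ln x)) / 6)/x^3 +
  ((72 + 36*(ln x * ln x) + 3*(ln x * ln x * ln x * ln x) - 72*ln x + 162*b - 168*b*ln x - 12*(ln x * ln x * ln x)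
                         + 25*(b*b*b) - 22*b*(ln x * ln x * ln x) + 36*(b*b)*(ln x * ln x) - 12*(b*b*b)*ln x + 84*b*(ln x * ln x)
                         + 120*(b*b) - 114*(b*b)*ln x) / 12)/x^4)"

definition RR :: "real \<Rightarrow> real \<Rightarrow> real" where
  "RR b x = (let Y = Yp b x in
   Y + b * ln Y  - ln (1 - b / Y + b*(b+1)/Y^2 - b*(b+1)*(b+2)/Y^3 + b*(b+1)*(b+2)*(b+3)/Y^4) - x + (1-b)*ln x)"

lemma RA1: "RR b \<in> o(\<lambda>x. 1/x^4)"
  unfolding RR_def Yp_def Let_def by (real_asymp simp add: field_simps)

lemma YY_Yp: "YY b t = Yp b t"
  unfolding YY_eq dc1 dc2 dc3 dc4 Yp_def
  by (simp add: power2_eq_square power3_eq_cube power4_eq_xxxx)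

lemma PP_inv: "PP b (1/Y) = 1 - b / Y + b*(b+1)/Y^2 - b*(b+1)*(b+2)/Y^3 + b*(b+1)*(b+2)*(b+3)/Y^4"
  unfolding PP_def by (simp add: power_one_over)

lemma HH_RR: "HH b (YY b t) + t - (1 - b) * ln t = - RR b t"
  unfolding RR_def HH_def Let_def YY_Yp PP_inv by simp

lemma RA4: "filterlim (YY b) at_top at_top"
  unfolding YY_Yp[abs_def] Yp_def by real_asymp



lemma ln_diff_bound:
  fixes u v :: real
  assumes "u \<ge> 1/2" "v \<ge> 1/2"
  shows "\<bar>ln u - ln v\<bar> \<le> 2 * \<bar>u - v\<bar>"
proof -
  have h: "ln p - ln q \<le> 2 * \<bar>p - q\<bar>" if "p \<ge> 1/2" "q \<ge> 1/2" for p q :: real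
  proof -
    have "ln p - ln q = ln (p / q)" using that by (simp add: ln_div)
    also have "\<dots> \<le> p / q - 1" using that by (intro ln_le_minus_one) simp
    also have "\<dots> = (p - q) / q" using that by (simp add: field_simps)
    also have "\<dots> \<le> \<bar>p - q\<bar> / q" using that by (intro divide_right_mono) auto
    also have "\<dots> \<le> 2 * \<bar>p - q\<bar>"
    proof -
      have "\<bar>p - q\<bar> * 1 \<le> \<bar>p - q\<bar> * (2 * q)" by (rule mult_left_mono) (use that in auto)
      then show ?thesis using that by (simp add: divide_le_eq algebra_simps)
    qed
    finally show ?thesis .
  qed
  from h[OF assms] h[OF assms(2,1)] show ?thesis by (simp add: abs_le_iff abs_minus_commute)
qed

lemma HH_decr:
  assumes Z: "\<And>z. z \<ge> Z \<Longrightarrow> PP b (1/z) > 0 \<and> -1 - b/z + Pd b z / PP b (1/z) \<le> -1/2"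
    and Z0: "Z > 0" and uv: "Z \<le> u" "u \<le> v"
  shows "HH b u - HH b v \<ge> (v - u) / 2"
proof (cases "u = v")
  case True thus ?thesis by simp
next
  case False
  then have "u < v" using uv by simp
  have "DERIV (HH b) t :> (-1 - b/t + Pd b t / PP b (1/t))" if "u \<le> t" "t \<le> v" for t
    using Z[of t] Z0 uv that by (intro HH_deriv) auto
  from MVT2[OF \<open>u < v\<close> this] obtain z where z: "u < z" "z < v"
    "HH b v - HH b u = (v - u) * (-1 - b/z + Pd b z / PP b (1/z))" by blast
  have "-1 - b/z + Pd b z / PP b (1/z) \<le> -1/2" using Z[of z] uv z by auto
  then have "(v - u) * (-1 - b/z + Pd b z / PP b (1/z)) \<le> (v - u) * (-1/2)"
    using uv by (intro mult_left_mono) auto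
  with z show ?thesis by linarith
qed

lemma F_split:
  assumes "0 < x" "x \<le> M" "(ee a has_integral lM) {M..}"
  shows "(ee a has_integral (integral {x..M} (ee a) + lM)) {x..}"
proof -
  have "(ee a has_integral (integral {x..M} (ee a) + lM)) ({x..M} \<union> {M..})"
  proof (rule has_integral_Un)
    show "(ee a has_integral integral {x..M} (ee a)) {x..M}"
      using ee_int[OF assms(1)] by (rule integrable_integral)
    show "(ee a has_integral lM) {M..}" by (rule assms(3))
    have "{x..M} \<inter> {M..} = {M}" using assms(2) by auto
    then show "negligible ({x..M} \<inter> {M..})" by simp
  qed
  moreover have "{x..M} \<union> {M..} = {x..}" using assms(2) by auto
  ultimately show ?thesis by simp
qed

lemma pow_small: "(\<lambda>t::real. C / t ^ 5) \<in> o(\<lambda>t. 1 / t ^ 4)"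
  by (real_asymp simp add: field_simps)

lemma ev_lin: "eventually (\<lambda>t::real. A + B * ln t < t / 2) at_top"
  by real_asymp

lemma ev_small5: "eventually (\<lambda>z::real. C / z ^ 5 \<le> 1/4) at_top"
  by (real_asymp simp add: field_simps)

lemma pow_big: "K \<le> 4 \<Longrightarrow> (\<lambda>t::real. 1 / t ^ 4) \<in> O(\<lambda>t. 1 / t ^ K)"
proof (intro landau_o.bigI[where c = 1])
  assume K: "K \<le> 4"
  show "eventually (\<lambda>t::real. norm (1 / t ^ 4) \<le> 1 * norm (1 / t ^ K)) at_top"
    using eventually_ge_at_top[of "1::real"]
  proof eventually_elim
    case (elim t)
    have "t ^ K \<le> t ^ 4" using K elim by (intro power_increasing) auto
    moreover have "t ^ K > 0" using elim by simp
    ultimately show ?case using elim by (simp add: frac_le)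
  qed
qed simp



lemma set1: "{1..1::nat} = {1}" by auto
lemma set2: "{1..2::nat} = {1,2}" by auto
lemma set3: "{1..3::nat} = {1,2,3}" by auto

lemma RAK:
  assumes "K \<in> {1..4::nat}"
  shows "(\<lambda>t. YY b t - (t - ln t + b * (\<Sum>k=1..K. dcoef b (ln t) k / t ^ k))) \<in> o(\<lambda>t. 1 / t ^ K)"
proof -
  have "K = 1 \<or> K = 2 \<or> K = 3 \<or> K = 4" using assms by auto
  then show ?thesis
  proof (elim disjE)
    assume "K = 1"
    then have KK: "{1..K} = {1}" "K = 1" by auto
    show ?thesis
      unfolding YY_eq KK(1) by (simp add: KK(2) dc1 dc1' dc2 dc3 dc4)
        (real_asymp simp add: field_simps power2_eq_square power3_eq_cube power4_eq_xxxx)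
  next
    assume "K = 2"
    then have KK: "{1..K} = {1,2}" "K = 2" by auto
    show ?thesis
      unfolding YY_eq KK(1) by (simp add: KK(2) dc1 dc1' dc2 dc3 dc4)
        (real_asymp simp add: field_simps power2_eq_square power3_eq_cube power4_eq_xxxx)
  next
    assume "K = 3"
    then have KK: "{1..K} = {1,2,3}" "K = 3" by auto
    show ?thesis
      unfolding YY_eq KK(1) by (simp add: KK(2) dc1 dc1' dc2 dc3 dc4)
        (real_asymp simp add: field_simps power2_eq_square power3_eq_cube power4_eq_xxxx)
  next
    assume "K = 4"
    then show ?thesis by (simp add: YY_def)
  qed
qed



lemma tri: "\<bar>u - v\<bar> \<le> \<bar>u - w\<bar> + \<bar>v - (w::real)\<bar>"
  using abs_triangle_ineq[of "u - w" "w - v"] by (simp add: abs_minus_commute)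

theorem mainTheorem6:
  fixes a :: real and x0 x :: "real \<Rightarrow> real" and K :: nat
  assumes a_pos: "a > 0"
    and x0_eq: "eventually (\<lambda>q. exp (- x0 q) * x0 q powr a = q * Gamma a) (at_right 0)"
    and x0_lim: "filterlim x0 at_top (at_right 0)"
    and x_eq: "eventually (\<lambda>q. x q > 0 \<and> Q_inc a (x q) = q) (at_right 0)"
    and K: "K \<in> {1..4}"
  shows "(\<lambda>q. x q - (x0 q - ln (x0 q)
              + (1 - a) * (\<Sum>k=1..K. dcoef (1 - a) (ln (x0 q)) k / x0 q ^ k)))
         \<in> o[at_right 0](\<lambda>q. 1 / x0 q ^ K)"
proof -
  define b where "b = 1 - a"
  have Gpos: "Gamma a > 0" using a_pos by (rule Gamma_real_pos)
  have fe: "(\<lambda>t. t powr (a - 1) * exp (- t)) = ee a" by (simp add: ee_def fun_eq_iff)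
  define X0 where "X0 = max 1 (2 * (a - 6))"
  define C where "C = 2 * \<bar>al5 a\<bar>"
  have ev_z: "eventually (\<lambda>z. PP b (1/z) \<ge> 3/4 \<and> C / z ^ 5 \<le> 1/4 \<and>
      -1 - b/z + Pd b z / PP b (1/z) \<le> -1/2 \<and> z \<ge> X0) at_top"
    by (intro eventually_conj PP_ev ev_small5 HH_ev_deriv eventually_ge_at_top)
  then obtain Z1 where Z1: "\<And>z. z \<ge> Z1 \<Longrightarrow> PP b (1/z) \<ge> 3/4 \<and> C / z ^ 5 \<le> 1/4 \<and>
      -1 - b/z + Pd b z / PP b (1/z) \<le> -1/2 \<and> z \<ge> X0"
    unfolding eventually_at_top_linorder by blast
  have Z1X0: "Z1 \<ge> X0" using Z1[of Z1] by simp
  have X0: "X0 \<ge> 1" "X0 \<ge> 2 * (a - 6)" unfolding X0_def by auto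
  have Fx: "\<exists>l. (ee a has_integral l) {z..} \<and> \<bar>l - ee a z * PP b (1/z)\<bar> \<le> ee a z * (C / z ^ 5)"
    if "z \<ge> Z1" for z
  proof -
    have z0: "z > 0" "2 * (a - 6) \<le> z" using that Z1X0 X0 by auto
    from F_main[OF z0] obtain l where l: "(ee a has_integral l) {z..}"
      "\<bar>l - SS a z\<bar> \<le> 2 * \<bar>al5 a\<bar> * ee (a - 5) z" by blast
    have "SS a z = ee a z * PP b (1/z)" using SS_PP[OF z0(1), of a] unfolding b_def .
    moreover have "2 * \<bar>al5 a\<bar> * ee (a - 5) z = ee a z * (C / z ^ 5)"
      using ee5[OF z0(1), of a] unfolding C_def by simp
    ultimately show ?thesis using l by auto
  qed
  have xlim: "filterlim x at_top (at_right 0)"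
    unfolding filterlim_at_top
  proof
    fix Z :: real
    define M where "M = max Z Z1"
    have M: "M \<ge> Z" "M \<ge> Z1" unfolding M_def by auto
    have M0: "M > 0" using M Z1X0 X0 by auto
    from Fx[OF M(2)] obtain lM where lM: "(ee a has_integral lM) {M..}"
      "\<bar>lM - ee a M * PP b (1/M)\<bar> \<le> ee a M * (C / M ^ 5)" by blast
    have eeM: "ee a M > 0" using M0 by (rule ee_pos)
    have h1: "ee a M * (3/4) \<le> ee a M * PP b (1/M)" using Z1[OF M(2)] eeM by (intro mult_left_mono) auto
    have h2: "ee a M * (C / M ^ 5) \<le> ee a M * (1/4)" using Z1[OF M(2)] eeM by (intro mult_left_mono) auto
    have lMpos: "lM > 0" using lM(2) h1 h2 eeM unfolding abs_le_iff by linarith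
    have "eventually (\<lambda>q. q < lM / Gamma a) (at_right 0)"
      using lMpos Gpos by (intro order_tendstoD(2)[OF tendsto_ident_at]) auto
    then show "eventually (\<lambda>q. Z \<le> x q) (at_right 0)"
      using x_eq
    proof eventually_elim
      case (elim q)
      then have xq: "x q > 0" "Q_inc a (x q) = q" by auto
      show "Z \<le> x q"
      proof (rule ccontr)
        assume "\<not> Z \<le> x q"
        then have "x q \<le> M" using M by auto
        from F_split[OF xq(1) this lM(1)]
        have "integral {x q..} (ee a) = integral {x q..M} (ee a) + lM" by (rule integral_unique)
        moreover have "integral {x q..M} (ee a) \<ge> 0" using ee_int_nonneg[OF xq(1)] .
        moreover have "integral {x q..} (ee a) = q * Gamma a"
          using xq(2) Gpos unfolding Q_inc_def fe by (simp add: field_simps)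
        ultimately have "q * Gamma a \<ge> lM" by linarith
        moreover have "q * Gamma a < lM" using elim(1) Gpos by (simp add: field_simps)
        ultimately show False by linarith
      qed
    qed
  qed
  define D where "D = 2 * C + 1"
  define B where "B = \<bar>b\<bar> + \<bar>1 - b\<bar>"
  have C0: "C \<ge> 0" unfolding C_def by simp
  have ev_x: "eventually (\<lambda>q. x q \<ge> Z1) (at_right 0)"
    using xlim unfolding filterlim_at_top by blast
  have ev_Y: "eventually (\<lambda>q. YY b (x0 q) \<ge> Z1) (at_right 0)"
    using filterlim_compose[OF RA4 x0_lim] unfolding filterlim_at_top by blast
  have ev_x0: "eventually (\<lambda>q. x0 q \<ge> 1) (at_right 0)"
    using x0_lim unfolding filterlim_at_top by blast
  have ev_lin': "eventually (\<lambda>q. D + B * ln (x0 q) < x0 q / 2) (at_right 0)"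
    using filterlim_iff[THEN iffD1, rule_format, OF x0_lim ev_lin[of D B]] by simp
  have key: "eventually (\<lambda>q. \<bar>x q - YY b (x0 q)\<bar> \<le> 128 * C / x0 q ^ 5 + 2 * \<bar>RR b (x0 q)\<bar>) (at_right 0)"
    using ev_x ev_Y ev_x0 ev_lin' x0_eq x_eq
  proof eventually_elim
    case (elim q)
    define y where "y = x q"
    define t where "t = x0 q"
    have y: "y \<ge> Z1" "y > 0" "y \<ge> 1" using elim Z1X0 X0 unfolding y_def by auto
    have t: "t \<ge> 1" "t > 0" using elim unfolding t_def by auto
    have Yge: "YY b t \<ge> Z1" using elim unfolding t_def by auto
    have lin: "D + B * ln t < t / 2" using elim unfolding t_def by auto
    from Fx[OF y(1)] obtain l where l: "(ee a has_integral l) {y..}"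
      "\<bar>l - ee a y * PP b (1/y)\<bar> \<le> ee a y * (C / y ^ 5)" by blast
    have eey: "ee a y > 0" using y(2) by (rule ee_pos)
    have lval: "l = exp (- t) * t powr a"
    proof -
      have "l = integral {y..} (ee a)" using l(1) by (simp add: integral_unique)
      also have "\<dots> = q * Gamma a" using elim Gpos unfolding Q_inc_def fe y_def by (simp add: field_simps)
      also have "\<dots> = exp (- t) * t powr a" using elim unfolding t_def by simp
      finally show ?thesis .
    qed
    define E where "E = l / ee a y - PP b (1/y)"
    have lE: "l = ee a y * (PP b (1/y) + E)" using eey unfolding E_def by (simp add: field_simps)
    have Eb: "\<bar>E\<bar> \<le> C / y ^ 5"
    proof -
      have eq: "\<bar>l - ee a y * PP b (1/y)\<bar> = ee a y * \<bar>E\<bar>"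
        unfolding lE using eey by (simp add: algebra_simps abs_mult)
      have "ee a y * \<bar>E\<bar> \<le> ee a y * (C / y ^ 5)" using l(2) unfolding eq .
      then show ?thesis using eey by (rule mult_left_le_imp_le)
    qed
    have Z1y: "PP b (1/y) \<ge> 3/4" "C / y ^ 5 \<le> 1/4" using Z1[OF y(1)] by auto
    have PE: "PP b (1/y) + E \<ge> 1/2" using Eb Z1y unfolding abs_le_iff by linarith
    have "ln l = (a - 1) * ln y - y + ln (PP b (1/y) + E)"
      using eey PE unfolding lE by (simp add: ln_mult ln_ee[OF y(2)])
    moreover have "ln l = - t + a * ln t"
      using t unfolding lval by (simp add: ln_mult ln_powr)
    ultimately have HG: "HH b y - (- t + (1 - b) * ln t) = ln (PP b (1/y)) - ln (PP b (1/y) + E)"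
      unfolding HH_def b_def by (simp add: algebra_simps)
    have HGb: "\<bar>HH b y - (- t + (1 - b) * ln t)\<bar> \<le> 2 * (C / y ^ 5)"
    proof -
      have "\<bar>HH b y - (- t + (1 - b) * ln t)\<bar> \<le> 2 * \<bar>PP b (1/y) - (PP b (1/y) + E)\<bar>"
        unfolding HG using Z1y PE by (intro ln_diff_bound) auto
      also have "\<dots> \<le> 2 * (C / y ^ 5)" using Eb by simp
      finally show ?thesis .
    qed
    have yt: "y \<ge> t / 2"
    proof (cases "y \<le> t")
      case False then show ?thesis using t by auto
    next
      case True
      have "1 \<le> y ^ 5" using y(3) by (rule one_le_power)
      then have "C * 1 \<le> C * y ^ 5" using C0 by (rule mult_left_mono)
      then have "C \<le> C * y ^ 5" by simp
      then have Cy: "C / y ^ 5 \<le> C" using y(2) by (simp add: divide_le_eq)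
      have "ln (1 / PP b (1/y)) \<le> 1 / PP b (1/y) - 1" using Z1y by (intro ln_le_minus_one) auto
      moreover have "1 / PP b (1/y) \<le> 4/3" using Z1y by (simp add: divide_le_eq)
      moreover have "ln (1 / PP b (1/y)) = - ln (PP b (1/y))" using Z1y by (simp add: ln_div)
      ultimately have lnP: "- ln (PP b (1/y)) \<le> 1/3" by linarith
      have lny: "0 \<le> ln y" "ln y \<le> ln t" using y True by auto
      have "b * ln y \<le> \<bar>b\<bar> * ln y" using lny by (intro mult_right_mono) auto
      also have "\<dots> \<le> \<bar>b\<bar> * ln t" using lny by (intro mult_left_mono) auto
      finally have b1: "b * ln y \<le> \<bar>b\<bar> * ln t" .
      have b2: "(1 - b) * ln t \<le> \<bar>1 - b\<bar> * ln t" using t by (intro mult_right_mono) auto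
      have "HH b y - (- t + (1 - b) * ln t) \<le> 2 * C" using HGb Cy by (auto simp: abs_le_iff)
      then have "t - y \<le> 2 * C + b * ln y - ln (PP b (1/y)) + (1 - b) * ln t"
        unfolding HH_def by simp
      also have "\<dots> \<le> D + B * ln t" using b1 b2 lnP unfolding D_def B_def by (simp add: algebra_simps)
      finally show ?thesis using lin by linarith
    qed
    have "C / y ^ 5 \<le> C / (t / 2) ^ 5"
      using C0 yt t by (intro divide_left_mono power_mono mult_pos_pos) auto
    also have "\<dots> = 32 * C / t ^ 5" by (simp add: field_simps)
    finally have HGb': "\<bar>HH b y - (- t + (1 - b) * ln t)\<bar> \<le> 64 * C / t ^ 5" using HGb by simp
    have RR': "\<bar>HH b (YY b t) - (- t + (1 - b) * ln t)\<bar> = \<bar>RR b t\<bar>"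
      using HH_RR[of b t] by simp
    have Zc: "\<And>z. Z1 \<le> z \<Longrightarrow> 0 < PP b (1 / z) \<and> - 1 - b / z + Pd b z / PP b (1 / z) \<le> - 1 / 2"
      using Z1 by fastforce
    have Z1pos: "Z1 > 0" using Z1X0 X0 by simp
    have "\<bar>y - YY b t\<bar> \<le> 2 * \<bar>HH b y - HH b (YY b t)\<bar>"
    proof (cases "y \<le> YY b t")
      case True
      have h: "(YY b t - y) / 2 \<le> HH b y - HH b (YY b t)" by (rule HH_decr[OF Zc Z1pos y(1) True])
      have "\<bar>y - YY b t\<bar> = YY b t - y" using True by simp
      also have "\<dots> \<le> 2 * (HH b y - HH b (YY b t))" using h by simp
      also have "\<dots> \<le> 2 * \<bar>HH b y - HH b (YY b t)\<bar>" by (intro mult_left_mono abs_ge_self) simp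
      finally show ?thesis .
    next
      case False
      then have "YY b t \<le> y" by simp
      have h: "(y - YY b t) / 2 \<le> HH b (YY b t) - HH b y" by (rule HH_decr[OF Zc Z1pos Yge \<open>YY b t \<le> y\<close>])
      have "\<bar>y - YY b t\<bar> = y - YY b t" using False by simp
      also have "\<dots> \<le> 2 * (HH b (YY b t) - HH b y)" using h by simp
      also have "\<dots> \<le> 2 * \<bar>HH b y - HH b (YY b t)\<bar>"
        using abs_ge_self[of "HH b (YY b t) - HH b y"] by (simp add: abs_minus_commute)
      finally show ?thesis .
    qed
    also have "\<dots> \<le> 2 * \<bar>HH b y - (- t + (1 - b) * ln t)\<bar> + 2 * \<bar>HH b (YY b t) - (- t + (1 - b) * ln t)\<bar>"
      using mult_left_mono[OF tri[of "HH b y" "HH b (YY b t)" "- t + (1 - b) * ln t"], of 2]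
      by (simp only: distrib_left)
    also have "\<dots> \<le> 128 * C / t ^ 5 + 2 * \<bar>RR b t\<bar>" using HGb' RR' by simp
    finally show ?case unfolding y_def t_def .
  qed
  have f4: "(\<lambda>q. x q - YY b (x0 q)) \<in> o[at_right 0](\<lambda>q. 1 / x0 q ^ 4)"
  proof (rule landau_o.smallI)
    fix c :: real assume c: "c > 0"
    have e1: "eventually (\<lambda>q. norm (128 * C / x0 q ^ 5) \<le> (c/2) * norm (1 / x0 q ^ 4)) (at_right 0)"
      using landau_o.small.compose[OF pow_small[of "128 * C"] x0_lim] c by (intro landau_o.smallD) auto
    have e2: "eventually (\<lambda>q. norm (RR b (x0 q)) \<le> (c/4) * norm (1 / x0 q ^ 4)) (at_right 0)"
      using landau_o.small.compose[OF RA1[of b] x0_lim] c by (intro landau_o.smallD) auto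
    show "eventually (\<lambda>q. norm (x q - YY b (x0 q)) \<le> c * norm (1 / x0 q ^ 4)) (at_right 0)"
      using key e1 e2
    proof eventually_elim
      case (elim q)
      then show ?case by (simp only: real_norm_def)
    qed
  qed
  have K4: "K \<le> 4" using K by simp
  have f4K: "(\<lambda>q. x q - YY b (x0 q)) \<in> o[at_right 0](\<lambda>q. 1 / x0 q ^ K)"
    using f4 landau_o.big.compose[OF pow_big[OF K4] x0_lim] by (rule landau_o.small_big_trans)
  have DK: "(\<lambda>q. YY b (x0 q) - (x0 q - ln (x0 q) + b * (\<Sum>k=1..K. dcoef b (ln (x0 q)) k / x0 q ^ k)))
      \<in> o[at_right 0](\<lambda>q. 1 / x0 q ^ K)"
    using landau_o.small.compose[OF RAK[OF K] x0_lim] .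
  have "(\<lambda>q. (x q - YY b (x0 q)) + (YY b (x0 q) - (x0 q - ln (x0 q) + b * (\<Sum>k=1..K. dcoef b (ln (x0 q)) k / x0 q ^ k))))
      \<in> o[at_right 0](\<lambda>q. 1 / x0 q ^ K)"
    by (rule sum_in_smallo(1)[OF f4K DK])
  moreover have "(\<lambda>q. (x q - YY b (x0 q)) + (YY b (x0 q) - (x0 q - ln (x0 q) + b * (\<Sum>k=1..K. dcoef b (ln (x0 q)) k / x0 q ^ k))))
      = (\<lambda>q. x q - (x0 q - ln (x0 q) + (1 - a) * (\<Sum>k=1..K. dcoef (1 - a) (ln (x0 q)) k / x0 q ^ k)))"
    by (rule ext) (simp add: b_def)
  ultimately show ?thesis by simp
qed


end
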